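(* There exist a constant $c_0\in(0,1)$ and a nonadaptive $t$-online-corruption-resilient $\varepsilon$-tester for linearity of functions $f:\{0,1\}^d\to\{0,1\}$ that is correct whenever $t\le c_0\cdot\varepsilon^{5/4}\cdot 2^{d/4}$ and makes $O\big(\frac1\varepsilon\log\frac t\varepsilon\big)$ queries.
   Context: An algorithm accesses an input function $f:D\to R$ ($D$ finite) only through an oracle $\mathcal{O}$, querying points one at a time and receiving $\mathcal{O}(x)$; initially $\mathcal{O}(x)=f(x)$ for all $x$. A $t$-online-corruption oracle, after answering each query, may replace $\mathcal{O}(x)$ at up to $t$ points $x$ by arbitrary values in the range of $f$; modified values are used for all future queries. Its choices (adversarial strategy) may depend on $f$, the queries and answers so far, and the algorithm's code, but not on the algorithm's future random coins. $f$ is $\varepsilon$-far from a property $\mathcal{P}$ (a set of functions) if it differs from every $g\in\mathcal{P}$ on at least an $\varepsilon$ fraction of $D$. A $t$-online-corruption-resilient $\varepsilon$-tester for $\mathcal{P}$ is a randomized algorithm that, with access to $f$ via a $t$-online-corruption oracle and for every adversarial strategy, accepts with probability at least $2/3$ if $f\in\mathcal{P}$ and rejects with probability at least $2/3$ if $f$ is $\varepsilon$-far from $\mathcal{P}$. Nonadaptive means queries do not depend on previous answers. $f:\{0,1\}^d\to\{0,1\}$ is linear if there is $S\subseteq[d]$ with $f(x)=\sum_{i\in S}x[i]\bmod 2$ for all $x$. *)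

theory Defs
  imports "HOL-Probability.Probability"
begin

definition cube :: "nat \<Rightarrow> bool list set" where
  "cube d = {x. length x = d}"

definition linear_fn :: "nat \<Rightarrow> (bool list \<Rightarrow> bool) \<Rightarrow> bool" where
  "linear_fn d f \<longleftrightarrow> (\<exists>S \<subseteq> {..<d}. \<forall>x \<in> cube d.
      (if f x then 1 else 0) = (\<Sum>i\<in>S. (if x ! i then 1 else 0 :: nat)) mod 2)"

definition eps_far_linear :: "nat \<Rightarrow> real \<Rightarrow> (bool list \<Rightarrow> bool) \<Rightarrow> bool" where
  "eps_far_linear d \<epsilon> f \<longleftrightarrow> (\<forall>g. linear_fn d g \<longrightarrow>
      real (card {x \<in> cube d. f x \<noteq> g x}) \<ge> \<epsilon> * 2 ^ d)"

text \<open>An adversarial strategy maps the history of (query, answer) pairs so far and the current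
  oracle to the next oracle; it is admissible (t-online-corruption) if every step changes the
  oracle on at most t points of the domain.\<close>
type_synonym adversary =
  "(bool list \<times> bool) list \<Rightarrow> (bool list \<Rightarrow> bool) \<Rightarrow> (bool list \<Rightarrow> bool)"

definition valid_adversary :: "nat \<Rightarrow> nat \<Rightarrow> adversary \<Rightarrow> bool" where
  "valid_adversary d t adv \<longleftrightarrow>
     (\<forall>h Or. card {x \<in> cube d. adv h Or x \<noteq> Or x} \<le> t)"

fun run_oracle :: "adversary \<Rightarrow> (bool list \<Rightarrow> bool) \<Rightarrow> (bool list \<times> bool) list
                    \<Rightarrow> bool list list \<Rightarrow> bool list" where
  "run_oracle adv Or hist [] = []"
| "run_oracle adv Or hist (q # qs) =
     (let a = Or q; h' = hist @ [(q, a)] in a # run_oracle adv (adv h' Or) h' qs)"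

text \<open>A nonadaptive tester is a distribution over pairs (query sequence, decision rule on the
  answers); all randomness is drawn upfront, the adversary only sees queries/answers so far.\<close>
definition accept_prob ::
  "(bool list list \<times> (bool list \<Rightarrow> bool)) pmf \<Rightarrow> adversary \<Rightarrow> (bool list \<Rightarrow> bool) \<Rightarrow> real" where
  "accept_prob T adv f =
     measure_pmf.prob T {(qs, dec). dec (run_oracle adv f [] qs)}"

end

theory Submission
  imports Defs
begin


definition LL :: "'a set \<Rightarrow> nat \<Rightarrow> 'a list set" where
  "LL A n = {xs. set xs \<subseteq> A \<and> length xs = n}"

lemma LL_0[simp]: "LL A 0 = {[]}" by (auto simp: LL_def)

lemma LL_Suc: "LL A (Suc n) = (\<lambda>(x,xs). x#xs) ` (A \<times> LL A n)"
  by (auto simp: LL_def length_Suc_conv image_iff)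

lemma finite_LL[simp]: "finite A \<Longrightarrow> finite (LL A n)"
  unfolding LL_def by (rule finite_lists_length_eq)

lemma card_LL: "finite A \<Longrightarrow> card (LL A n) = card A ^ n"
  unfolding LL_def by (rule card_lists_length_eq)

lemma sum_LL_Suc:
  assumes "finite A"
  shows "(\<Sum>xs\<in>LL A (Suc n). g xs) = (\<Sum>x\<in>A. \<Sum>xs\<in>LL A n. g (x#xs))"
proof -
  have inj: "inj_on (\<lambda>(x,xs). x#xs) (A \<times> LL A n)" by (auto simp: inj_on_def)
  have "(\<Sum>xs\<in>LL A (Suc n). g xs) = (\<Sum>p\<in>A \<times> LL A n. g ((\<lambda>(x,xs). x#xs) p))"
    unfolding LL_Suc by (rule sum.reindex[OF inj, unfolded comp_def])
  also have "\<dots> = (\<Sum>(x,xs)\<in>A \<times> LL A n. g (x#xs))" by (simp add: split_def)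
  also have "\<dots> = (\<Sum>x\<in>A. \<Sum>xs\<in>LL A n. g (x#xs))"
    by (rule sum.cartesian_product[symmetric])
  finally show ?thesis .
qed

lemma cube_LL: "cube d = LL UNIV d" by (auto simp: cube_def LL_def)
lemma finite_cube[simp]: "finite (cube d)" by (simp add: cube_LL)
lemma card_cube: "card (cube d) = 2 ^ d" by (simp add: cube_LL card_LL)

fun xorl :: "bool list \<Rightarrow> bool list \<Rightarrow> bool list" where
  "xorl (a#as) (b#bs) = (a \<noteq> b) # xorl as bs"
| "xorl _ _ = []"

fun ip :: "bool list \<Rightarrow> bool list \<Rightarrow> bool" where
  "ip (a#as) (b#bs) = ((a \<and> b) \<noteq> ip as bs)"
| "ip _ _ = False"

definition zero :: "nat \<Rightarrow> bool list" where "zero d = replicate d False"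

fun msum :: "nat \<Rightarrow> bool list \<Rightarrow> bool list list \<Rightarrow> bool list" where
  "msum d (b#M) (x#xs) = (if b then xorl x (msum d M xs) else msum d M xs)"
| "msum d _ _ = zero d"

fun par :: "bool list \<Rightarrow> bool" where
  "par [] = False" | "par (b#bs) = (b \<noteq> par bs)"

definition mask :: "bool list \<Rightarrow> bool list" where "mask S = par S # S"

lemma length_xorl[simp]: "length (xorl a b) = min (length a) (length b)"
  by (induction a b rule: xorl.induct) auto

lemma ip_sym: "ip a b = ip b a"
  by (induction a b rule: ip.induct) auto

lemma xorl_comm: "xorl a b = xorl b a"
  by (induction a b rule: xorl.induct) auto

lemma xorl_assoc: "xorl (xorl a b) c = xorl a (xorl b c)"
  by (induction a b arbitrary: c rule: xorl.induct) (auto, case_tac c, auto)+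

lemma xorl_self: "xorl a a = zero (length a)"
  by (induction a) (auto simp: zero_def)

lemma xorl_zero: "length a = d \<Longrightarrow> xorl a (zero d) = a"
  by (induction a arbitrary: d) (auto simp: zero_def)

lemma length_zero[simp]: "length (zero d) = d" by (simp add: zero_def)

lemma ip_xorl: "length a = length b \<Longrightarrow> ip c (xorl a b) = (ip c a \<noteq> ip c b)"
proof (induction a b arbitrary: c rule: xorl.induct)
  case (1 a as b bs c) then show ?case by (cases c) auto
qed auto

lemma ip_zero: "ip c (zero d) = False"
  by (induction d arbitrary: c) (auto simp: zero_def, case_tac c, auto)

lemma length_msum: "set xs \<subseteq> cube d \<Longrightarrow> length (msum d M xs) = d"
  by (induction d M xs rule: msum.induct) (auto simp: cube_def)

lemma msum_cube: "set xs \<subseteq> cube d \<Longrightarrow> msum d M xs \<in> cube d"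
  using length_msum by (simp add: cube_def)

lemma xorl_cube: "x \<in> cube d \<Longrightarrow> y \<in> cube d \<Longrightarrow> xorl x y \<in> cube d"
  by (simp add: cube_def)



definition chi :: "bool list \<Rightarrow> bool list \<Rightarrow> real" where
  "chi a x = (if ip a x then -1 else 1)"
definition Fr :: "(bool list \<Rightarrow> bool) \<Rightarrow> bool list \<Rightarrow> real" where
  "Fr f x = (if f x then -1 else 1)"
definition sg :: "bool list \<Rightarrow> bool list \<Rightarrow> real" where
  "sg M ys = (if ip M ys then -1 else 1)"
definition hat :: "nat \<Rightarrow> (bool list \<Rightarrow> real) \<Rightarrow> bool list \<Rightarrow> real" where
  "hat d G a = (\<Sum>x\<in>cube d. G x * chi a x) / 2 ^ d"
definition wt :: "bool list \<Rightarrow> nat" where "wt M = length (filter id M)"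

lemma sum_bool: "(\<Sum>b\<in>(UNIV::bool set). g b) = g True + g False"
  by (simp add: UNIV_bool add.commute)

lemma sum_cube_Suc: "(\<Sum>x\<in>cube (Suc d). g x) = (\<Sum>x\<in>cube d. g (True # x)) + (\<Sum>x\<in>cube d. g (False # x))"
  unfolding cube_LL by (simp add: sum_LL_Suc sum_bool)

lemma chi_Cons: "chi (a#as) (b#bs) = (if a \<and> b then - chi as bs else chi as bs)"
  by (simp add: chi_def)

lemma chi_sum: "a \<in> cube d \<Longrightarrow> (\<Sum>x\<in>cube d. chi a x) = (if a = zero d then 2 ^ d else 0)"
proof (induction d arbitrary: a)
  case 0 then show ?case by (simp add: cube_def zero_def chi_def)
next
  case (Suc d)
  then obtain b a' where a: "a = b # a'" "a' \<in> cube d" by (cases a) (auto simp: cube_def)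
  have z: "zero (Suc d) = False # zero d" by (simp add: zero_def)
  show ?case
  proof (cases b)
    case True
    have "(\<Sum>x\<in>cube (Suc d). chi a x) = (\<Sum>x\<in>cube d. - chi a' x) + (\<Sum>x\<in>cube d. chi a' x)"
      unfolding sum_cube_Suc using True a by (simp add: chi_Cons)
    also have "\<dots> = 0" by (simp add: sum_negf)
    finally show ?thesis using True a z by simp
  next
    case False
    have "(\<Sum>x\<in>cube (Suc d). chi a x) = 2 * (\<Sum>x\<in>cube d. chi a' x)"
      unfolding sum_cube_Suc using False a by (simp add: chi_Cons)
    then show ?thesis using False a z Suc.IH[OF a(2)] by auto
  qed
qed

lemma chi_sym: "chi a x = chi x a" by (simp add: chi_def ip_sym)

lemma chi_sum2: "x \<in> cube d \<Longrightarrow> (\<Sum>a\<in>cube d. chi a x) = (if x = zero d then 2 ^ d else 0)"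
  by (subst chi_sym) (rule chi_sum)

lemma xorl_cancel: "length x = length s \<Longrightarrow> xorl x (xorl s x) = s"
proof (induction x arbitrary: s)
  case (Cons a x) then show ?case by (cases s) auto
qed simp

lemma xorl_cancel2: "length z = length y \<Longrightarrow> xorl (xorl z y) y = z"
proof (induction z arbitrary: y)
  case (Cons a z) then show ?case by (cases y) auto
qed simp

lemma sum_transl: assumes "y \<in> cube d"
  shows "(\<Sum>z\<in>cube d. h (xorl z y)) = (\<Sum>z\<in>cube d. h z)"
  by (rule sum.reindex_bij_witness[where i="\<lambda>z. xorl z y" and j="\<lambda>z. xorl z y"])
     (use assms in \<open>auto simp: cube_def xorl_cancel2\<close>)

lemma chi_xorl: "length x = length y \<Longrightarrow> chi a (xorl x y) = chi a x * chi a y"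
  by (simp add: chi_def ip_xorl)

lemma zero_cube[simp]: "zero d \<in> cube d" by (simp add: cube_def)

lemma hat_sum: "(\<Sum>a\<in>cube d. hat d G a) = G (zero d)"
proof -
  have "(\<Sum>a\<in>cube d. hat d G a) = (\<Sum>a\<in>cube d. \<Sum>x\<in>cube d. G x * chi a x) / 2 ^ d"
    unfolding hat_def by (rule sum_divide_distrib[symmetric])
  also have "(\<Sum>a\<in>cube d. \<Sum>x\<in>cube d. G x * chi a x) = (\<Sum>x\<in>cube d. \<Sum>a\<in>cube d. G x * chi a x)"
    by (rule sum.swap)
  also have "\<dots> = (\<Sum>x\<in>cube d. (if x = zero d then G x * 2 ^ d else 0))"
    by (rule sum.cong) (auto simp: chi_sum2 sum_distrib_left[symmetric])
  also have "\<dots> = G (zero d) * 2 ^ d" by (simp add: sum.delta)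
  finally show ?thesis by simp
qed

lemma hat_conv:
  "hat d (\<lambda>s. (\<Sum>x\<in>cube d. G (xorl x s) * F x) / 2 ^ d) a = hat d G a * hat d F a"
proof -
  have inner: "(\<Sum>s\<in>cube d. G (xorl x s) * chi a s) = chi a x * (\<Sum>s\<in>cube d. G s * chi a s)"
    if x: "x \<in> cube d" for x
  proof -
    have "(\<Sum>s\<in>cube d. G (xorl x s) * chi a s) = (\<Sum>s\<in>cube d. G (xorl x (xorl s x)) * chi a (xorl s x))"
      by (rule sum_transl[OF x, symmetric])
    also have "\<dots> = (\<Sum>s\<in>cube d. chi a x * (G s * chi a s))"
      by (rule sum.cong) (use x in \<open>auto simp: cube_def xorl_cancel chi_xorl\<close>)
    finally show ?thesis by (simp add: sum_distrib_left)
  qed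
  have "hat d (\<lambda>s. (\<Sum>x\<in>cube d. G (xorl x s) * F x) / 2 ^ d) a
      = (\<Sum>s\<in>cube d. \<Sum>x\<in>cube d. G (xorl x s) * F x * chi a s) / 2 ^ d / 2 ^ d"
    unfolding hat_def by (simp add: sum_divide_distrib[symmetric] sum_distrib_right)
  also have "(\<Sum>s\<in>cube d. \<Sum>x\<in>cube d. G (xorl x s) * F x * chi a s)
      = (\<Sum>x\<in>cube d. \<Sum>s\<in>cube d. G (xorl x s) * F x * chi a s)"
    by (rule sum.swap)
  also have "\<dots> = (\<Sum>x\<in>cube d. F x * chi a x * (\<Sum>s\<in>cube d. G s * chi a s))"
  proof (rule sum.cong)
    fix x assume x: "x \<in> cube d"
    have "(\<Sum>s\<in>cube d. G (xorl x s) * F x * chi a s) = F x * (\<Sum>s\<in>cube d. G (xorl x s) * chi a s)"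
      by (simp add: sum_distrib_left mult_ac)
    also have "\<dots> = F x * chi a x * (\<Sum>s\<in>cube d. G s * chi a s)" by (simp add: inner[OF x])
    finally show "(\<Sum>s\<in>cube d. G (xorl x s) * F x * chi a s) = F x * chi a x * (\<Sum>s\<in>cube d. G s * chi a s)" .
  qed simp
  also have "\<dots> = (\<Sum>x\<in>cube d. F x * chi a x) * (\<Sum>s\<in>cube d. G s * chi a s)"
    by (rule sum_distrib_right[symmetric])
  finally show ?thesis unfolding hat_def by simp
qed

lemma sg_Cons: "sg (b#M) (c#cs) = (if b \<and> c then -1 else 1) * sg M cs"
  by (simp add: sg_def)

lemma masked_identity:
  "(\<Sum>xs\<in>LL (cube d) (length M). G (msum d M xs) * sg M (map f xs))
     = 2 ^ (d * length M) * (\<Sum>a\<in>cube d. hat d G a * hat d (Fr f) a ^ wt M)"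
proof (induction M arbitrary: G)
  case Nil
  then show ?case by (simp add: sg_def wt_def hat_sum)
next
  case (Cons b M)
  show ?case
  proof (cases b)
    case False
    have "(\<Sum>xs\<in>LL (cube d) (length (b#M)). G (msum d (b#M) xs) * sg (b#M) (map f xs))
        = (\<Sum>x\<in>cube d. \<Sum>xs\<in>LL (cube d) (length M). G (msum d M xs) * sg M (map f xs))"
      using False by (simp add: sum_LL_Suc sg_Cons)
    also have "\<dots> = 2 ^ d * (2 ^ (d * length M) * (\<Sum>a\<in>cube d. hat d G a * hat d (Fr f) a ^ wt M))"
      by (simp add: Cons.IH card_cube)
    finally show ?thesis using False by (simp add: wt_def power_add mult_ac)
  next
    case True
    define G' where "G' s = (\<Sum>x\<in>cube d. G (xorl x s) * Fr f x) / 2 ^ d" for s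
    have "(\<Sum>xs\<in>LL (cube d) (length (b#M)). G (msum d (b#M) xs) * sg (b#M) (map f xs))
        = (\<Sum>x\<in>cube d. \<Sum>xs\<in>LL (cube d) (length M). G (xorl x (msum d M xs)) * (Fr f x * sg M (map f xs)))"
      using True by (simp add: sum_LL_Suc sg_Cons Fr_def)
    also have "\<dots> = (\<Sum>xs\<in>LL (cube d) (length M). \<Sum>x\<in>cube d. G (xorl x (msum d M xs)) * (Fr f x * sg M (map f xs)))"
      by (rule sum.swap)
    also have "\<dots> = (\<Sum>xs\<in>LL (cube d) (length M). (\<Sum>x\<in>cube d. G (xorl x (msum d M xs)) * Fr f x) * sg M (map f xs))"
      by (intro sum.cong refl) (simp add: sum_distrib_right mult.assoc)
    also have "\<dots> = 2 ^ d * (\<Sum>xs\<in>LL (cube d) (length M). G' (msum d M xs) * sg M (map f xs))"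
      by (simp add: G'_def sum_distrib_left)
    also have "\<dots> = 2 ^ d * (2 ^ (d * length M) * (\<Sum>a\<in>cube d. hat d G' a * hat d (Fr f) a ^ wt M))"
      by (simp add: Cons.IH)
    also have "\<dots> = 2 ^ (d * length (b#M)) * (\<Sum>a\<in>cube d. hat d G a * hat d (Fr f) a ^ wt (b#M))"
      using True unfolding G'_def hat_conv by (simp add: wt_def power_add mult_ac)
    finally show ?thesis .
  qed
qed



lemma sum_ind: "finite A \<Longrightarrow> (\<Sum>x\<in>A. (if P x then 1 else 0::real)) = real (card {x\<in>A. P x})"
proof -
  assume A: "finite A"
  have "(\<Sum>x\<in>A. (if P x then 1 else 0::real)) = (\<Sum>x\<in>A. of_bool (P x))" by (simp add: of_bool_def)
  also have "\<dots> = real (card (A \<inter> {x. P x}))" using A by simp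
  also have "A \<inter> {x. P x} = {x\<in>A. P x}" by auto
  finally show ?thesis .
qed

lemma ip_sum: "length x = length a \<Longrightarrow> ip a x = odd (\<Sum>i<length a. (if a!i \<and> x!i then 1 else 0::nat))"
proof (induction a arbitrary: x)
  case Nil then show ?case by simp
next
  case (Cons b a)
  then obtain c x' where x: "x = c # x'" "length x' = length a" by (cases x) auto
  show ?case using Cons.IH[OF x(2)] x
    by (simp only: length_Cons sum.lessThan_Suc_shift nth_Cons_0 nth_Cons_Suc) auto
qed

lemma linear_ip: assumes "a \<in> cube d" shows "linear_fn d (ip a)"
  unfolding linear_fn_def
proof (intro exI[of _ "{i. i < d \<and> a!i}"] conjI ballI)
  show "{i. i < d \<and> a ! i} \<subseteq> {..<d}" by auto
  fix x assume x: "x \<in> cube d"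
  have "(\<Sum>i\<in>{i. i < d \<and> a ! i}. (if x ! i then 1 else 0::nat)) = (\<Sum>i\<in>{i\<in>{..<d}. a ! i}. (if x ! i then 1 else 0::nat))"
    by (rule sum.cong) auto
  also have "\<dots> = (\<Sum>i<d. (if a!i \<and> x!i then 1 else 0::nat))"
    by (subst sum.inter_filter) (auto intro!: sum.cong)
  finally have e: "(\<Sum>i\<in>{i. i < d \<and> a ! i}. (if x ! i then 1 else 0::nat)) = (\<Sum>i<d. (if a!i \<and> x!i then 1 else 0::nat))" .
  have "ip a x = odd (\<Sum>i<d. (if a!i \<and> x!i then 1 else 0::nat))"
    using ip_sum[of x a] x assms by (simp add: cube_def)
  then show "(if ip a x then 1 else 0) = (\<Sum>i\<in>{i. i < d \<and> a ! i}. (if x ! i then 1 else 0::nat)) mod 2"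
    unfolding e by (simp add: mod2_eq_if)
qed

lemma hat_Fr: assumes "a \<in> cube d"
  shows "hat d (Fr f) a = 1 - 2 * real (card {x\<in>cube d. f x \<noteq> ip a x}) / 2 ^ d"
proof -
  have "(\<Sum>x\<in>cube d. Fr f x * chi a x) = (\<Sum>x\<in>cube d. 1 - 2 * (if f x \<noteq> ip a x then 1 else 0))"
    by (rule sum.cong) (auto simp: Fr_def chi_def)
  also have "\<dots> = 2 ^ d - 2 * real (card {x\<in>cube d. f x \<noteq> ip a x})"
    by (simp add: sum_subtractf sum_distrib_left[symmetric] sum_ind card_cube)
  finally show ?thesis unfolding hat_def by (simp add: diff_divide_distrib)
qed

lemma far_hat: assumes "eps_far_linear d e f" "a \<in> cube d"
  shows "hat d (Fr f) a \<le> 1 - 2 * e"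
proof -
  have "real (card {x\<in>cube d. f x \<noteq> ip a x}) \<ge> e * 2 ^ d"
  proof -
    have "real (card {x \<in> cube d. f x \<noteq> ip a x}) \<ge> e * 2 ^ d"
      using assms(1) linear_ip[OF assms(2)] unfolding eps_far_linear_def by blast
    then show ?thesis .
  qed
  then have "2 * real (card {x\<in>cube d. f x \<noteq> ip a x}) / 2 ^ d \<ge> 2 * e"
    by (simp add: field_simps)
  then show ?thesis using hat_Fr[OF assms(2), of f] by linarith
qed

lemma msum_single: "x \<in> cube d \<Longrightarrow> msum d [True] [x] = x"
  using xorl_zero[of x d] by (simp add: cube_def)

lemma parseval: "(\<Sum>a\<in>cube d. hat d (Fr f) a ^ 2) = 1"
proof -
  have "(\<Sum>xs\<in>LL (cube d) (length [True]). Fr f (msum d [True] xs) * sg [True] (map f xs))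
     = 2 ^ (d * length [True]) * (\<Sum>a\<in>cube d. hat d (Fr f) a * hat d (Fr f) a ^ wt [True])"
    by (rule masked_identity)
  moreover have "(\<Sum>xs\<in>LL (cube d) (length [True]). Fr f (msum d [True] xs) * sg [True] (map f xs)) = 2 ^ d"
  proof -
    have "(\<Sum>xs\<in>LL (cube d) (length [True]). Fr f (msum d [True] xs) * sg [True] (map f xs))
       = (\<Sum>x\<in>cube d. Fr f (msum d [True] [x]) * sg [True] [f x])"
      by (simp add: sum_LL_Suc)
    also have "\<dots> = (\<Sum>x\<in>cube d. 1)"
      by (rule sum.cong) (auto simp: Fr_def sg_def cube_def xorl_zero)
    finally show ?thesis by (simp add: card_cube)
  qed
  ultimately show ?thesis by (simp add: wt_def power2_eq_square)
qed

lemma hat_le1: "a \<in> cube d \<Longrightarrow> \<bar>hat d (Fr f) a\<bar> \<le> 1"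
proof -
  assume a: "a \<in> cube d"
  have "hat d (Fr f) a ^ 2 \<le> (\<Sum>a\<in>cube d. hat d (Fr f) a ^ 2)"
    by (rule member_le_sum) (use a in auto)
  then have "hat d (Fr f) a ^ 2 \<le> 1" by (simp add: parseval)
  then show ?thesis using abs_square_le_1 by blast
qed

lemma sound_count:
  assumes far: "eps_far_linear d e f" and e: "0 < e" "e < 1"
    and w: "even (wt M)" "wt M \<ge> 2"
  shows "real (card {xs\<in>LL (cube d) (length M). f (msum d M xs) = ip M (map f xs)})
           \<le> (1 - e/2) * 2 ^ (d * length M)"
proof -
  define c where "c = max (1 - 2*e) 0"
  let ?h = "\<lambda>a. hat d (Fr f) a"
  have bnd: "?h a * ?h a ^ wt M \<le> c * ?h a ^ 2" if a: "a \<in> cube d" for a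
  proof -
    have p0: "?h a ^ wt M \<ge> 0" using w(1) by (simp add: zero_le_even_power)
    have "?h a ^ wt M = \<bar>?h a\<bar> ^ wt M" using w(1) by (simp add: power_even_abs)
    also have "\<dots> \<le> \<bar>?h a\<bar> ^ 2" by (rule power_decreasing) (use w(2) hat_le1[OF a] in auto)
    finally have p2: "?h a ^ wt M \<le> ?h a ^ 2" by simp
    have "?h a \<le> c" using far_hat[OF far a] by (simp add: c_def)
    then have "?h a * ?h a ^ wt M \<le> c * ?h a ^ wt M" using p0 by (rule mult_right_mono)
    also have "\<dots> \<le> c * ?h a ^ 2" using p2 by (rule mult_left_mono) (simp add: c_def)
    finally show ?thesis .
  qed
  have "(\<Sum>a\<in>cube d. ?h a * ?h a ^ wt M) \<le> (\<Sum>a\<in>cube d. c * ?h a ^ 2)"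
    by (rule sum_mono) (rule bnd)
  also have "\<dots> = c" by (simp add: sum_distrib_left[symmetric] parseval)
  also have "c \<le> 1 - e" using e by (simp add: c_def)
  finally have S: "(\<Sum>a\<in>cube d. ?h a * ?h a ^ wt M) \<le> 1 - e" .
  let ?L = "LL (cube d) (length M)"
  have "real (card {xs\<in>?L. f (msum d M xs) = ip M (map f xs)})
      = (\<Sum>xs\<in>?L. (if f (msum d M xs) = ip M (map f xs) then 1 else 0))"
    by (simp add: sum_ind)
  also have "\<dots> = (\<Sum>xs\<in>?L. (1 + Fr f (msum d M xs) * sg M (map f xs)) / 2)"
    by (rule sum.cong) (auto simp: Fr_def sg_def)
  also have "\<dots> = (real (card ?L) + (\<Sum>xs\<in>?L. Fr f (msum d M xs) * sg M (map f xs))) / 2"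
    by (simp add: sum_divide_distrib[symmetric] sum.distrib)
  also have "\<dots> = (2 ^ (d * length M) + 2 ^ (d * length M) * (\<Sum>a\<in>cube d. ?h a * ?h a ^ wt M)) / 2"
    by (simp add: masked_identity card_LL card_cube power_mult)
  also have "\<dots> \<le> (2 ^ (d * length M) + 2 ^ (d * length M) * (1 - e)) / 2"
    using S by (intro divide_right_mono add_left_mono mult_left_mono) auto
  also have "\<dots> = (1 - e/2) * 2 ^ (d * length M)" by (simp add: field_simps)
  finally show ?thesis .
qed

lemma nth_xorl: "i < length a \<Longrightarrow> i < length b \<Longrightarrow> xorl a b ! i = (a!i \<noteq> b!i)"
  by (induction a b arbitrary: i rule: xorl.induct) (auto simp: nth_Cons split: nat.split)

lemma lin_char:
  assumes "linear_fn d f"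
  obtains S where "S \<subseteq> {..<d}" "\<And>x. x \<in> cube d \<Longrightarrow> f x = odd (\<Sum>i\<in>S. (if x ! i then 1 else 0::nat))"
proof -
  from assms obtain S where S: "S \<subseteq> {..<d}" and h: "\<forall>x\<in>cube d. (if f x then 1 else 0) = (\<Sum>i\<in>S. (if x ! i then 1 else 0::nat)) mod 2"
    unfolding linear_fn_def by blast
  have "f x = odd (\<Sum>i\<in>S. (if x ! i then 1 else 0::nat))" if "x \<in> cube d" for x
    using h[rule_format, OF that] by (auto simp: mod2_eq_if split: if_splits)
  then show ?thesis using that S by blast
qed

lemma lin_xor:
  assumes "linear_fn d f" "x \<in> cube d" "y \<in> cube d"
  shows "f (xorl x y) = (f x \<noteq> f y)"
proof -
  obtain S where S: "S \<subseteq> {..<d}" and h: "\<And>x. x \<in> cube d \<Longrightarrow> f x = odd (\<Sum>i\<in>S. (if x ! i then 1 else 0::nat))"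
    using lin_char[OF assms(1)] by blast
  have fin: "finite S" using S finite_subset by blast
  have "(\<Sum>i\<in>S. (if xorl x y ! i then 1 else 0::nat)) + 2 * (\<Sum>i\<in>S. (if x!i \<and> y!i then 1 else 0::nat))
      = (\<Sum>i\<in>S. (if x ! i then 1 else 0::nat)) + (\<Sum>i\<in>S. (if y ! i then 1 else 0::nat))"
  proof -
    have "(\<Sum>i\<in>S. (if xorl x y ! i then 1 else 0::nat)) + 2 * (\<Sum>i\<in>S. (if x!i \<and> y!i then 1 else 0::nat))
       = (\<Sum>i\<in>S. (if xorl x y ! i then 1 else 0::nat) + 2 * (if x!i \<and> y!i then 1 else 0::nat))"
      by (simp add: sum.distrib sum_distrib_left)
    also have "\<dots> = (\<Sum>i\<in>S. (if x ! i then 1 else 0::nat) + (if y ! i then 1 else 0::nat))"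
    proof (rule sum.cong)
      fix i assume "i \<in> S"
      then have "i < d" using S by auto
      then show "(if xorl x y ! i then 1 else 0::nat) + 2 * (if x!i \<and> y!i then 1 else 0::nat)
          = (if x ! i then 1 else 0::nat) + (if y ! i then 1 else 0::nat)"
        using assms by (auto simp: nth_xorl cube_def)
    qed simp
    finally show ?thesis by (simp add: sum.distrib)
  qed
  then have "odd (\<Sum>i\<in>S. (if xorl x y ! i then 1 else 0::nat)) =
      (odd (\<Sum>i\<in>S. (if x ! i then 1 else 0::nat)) \<noteq> odd (\<Sum>i\<in>S. (if y ! i then 1 else 0::nat)))"
    by (metis (no_types, lifting) even_add even_mult_iff even_numeral)
  moreover have "f (xorl x y) = odd (\<Sum>i\<in>S. (if xorl x y ! i then 1 else 0::nat))"
    by (rule h) (rule xorl_cube[OF assms(2,3)])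
  moreover have "f x = odd (\<Sum>i\<in>S. (if x ! i then 1 else 0::nat))" by (rule h) (rule assms(2))
  moreover have "f y = odd (\<Sum>i\<in>S. (if y ! i then 1 else 0::nat))" by (rule h) (rule assms(3))
  ultimately show ?thesis by simp
qed

lemma lin_zero: assumes "linear_fn d f" shows "f (zero d) = False"
proof -
  have "f (xorl (zero d) (zero d)) = (f (zero d) \<noteq> f (zero d))" by (rule lin_xor[OF assms]) auto
  moreover have "xorl (zero d) (zero d) = zero d" by (metis xorl_self length_zero)
  ultimately show ?thesis by simp
qed

lemma lin_msum:
  assumes "linear_fn d f" "set xs \<subseteq> cube d" "length M = length xs"
  shows "f (msum d M xs) = ip M (map f xs)"
  using assms(2,3)
proof (induction M arbitrary: xs)
  case Nil then show ?case using lin_zero[OF assms(1)] by simp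
next
  case (Cons b M)
  then obtain x xs' where xs: "xs = x # xs'" by (cases xs) auto
  have IH: "f (msum d M xs') = ip M (map f xs')" using Cons xs by auto
  show ?case using Cons.prems xs IH lin_xor[OF assms(1), of x "msum d M xs'"] msum_cube[of xs' d M]
    by auto
qed



fun bad :: "adversary \<Rightarrow> (bool list \<Rightarrow> bool) \<Rightarrow> (bool list \<Rightarrow> bool) \<Rightarrow> (bool list \<times> bool) list
              \<Rightarrow> bool list list \<Rightarrow> bool" where
  "bad adv f Or h [] = False"
| "bad adv f Or h (q # qs) = (Or q \<noteq> f q \<or> bad adv f (adv (h @ [(q, Or q)]) Or) (h @ [(q, Or q)]) qs)"

fun st :: "adversary \<Rightarrow> (bool list \<Rightarrow> bool) \<Rightarrow> (bool list \<times> bool) list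
              \<Rightarrow> bool list list \<Rightarrow> (bool list \<Rightarrow> bool) \<times> (bool list \<times> bool) list" where
  "st adv Or h [] = (Or, h)"
| "st adv Or h (q # qs) = st adv (adv (h @ [(q, Or q)]) Or) (h @ [(q, Or q)]) qs"

lemma run_good: "\<not> bad adv f Or h qs \<Longrightarrow> run_oracle adv Or h qs = map f qs"
  by (induction qs arbitrary: Or h) (auto simp: Let_def)

lemma bad_append: "bad adv f Or h (a @ b) = (bad adv f Or h a \<or> bad adv f (fst (st adv Or h a)) (snd (st adv Or h a)) b)"
  by (induction a arbitrary: Or h) auto

lemma st_len: "length (snd (st adv Or h a)) = length h + length a"
  by (induction a arbitrary: Or h) auto

definition diff :: "nat \<Rightarrow> (bool list \<Rightarrow> bool) \<Rightarrow> (bool list \<Rightarrow> bool) \<Rightarrow> nat" where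
  "diff d f Or = card {x\<in>cube d. Or x \<noteq> f x}"

lemma diff_step: assumes "valid_adversary d t adv"
  shows "diff d f (adv h Or) \<le> diff d f Or + t"
proof -
  have "{x\<in>cube d. adv h Or x \<noteq> f x} \<subseteq> {x\<in>cube d. Or x \<noteq> f x} \<union> {x\<in>cube d. adv h Or x \<noteq> Or x}"
    by auto
  then have "diff d f (adv h Or) \<le> card ({x\<in>cube d. Or x \<noteq> f x} \<union> {x\<in>cube d. adv h Or x \<noteq> Or x})"
    unfolding diff_def by (intro card_mono) auto
  also have "\<dots> \<le> diff d f Or + card {x\<in>cube d. adv h Or x \<noteq> Or x}"
    unfolding diff_def by (rule card_Un_le)
  also have "card {x\<in>cube d. adv h Or x \<noteq> Or x} \<le> t"
    using assms unfolding valid_adversary_def by blast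
  finally show ?thesis by simp
qed

lemma diff_st: assumes "valid_adversary d t adv"
  shows "diff d f (fst (st adv Or h a)) \<le> diff d f Or + t * length a"
proof (induction a arbitrary: Or h)
  case Nil then show ?case by simp
next
  case (Cons q a)
  have "diff d f (fst (st adv Or h (q # a))) \<le> diff d f (adv (h @ [(q, Or q)]) Or) + t * length a"
    using Cons.IH by simp
  also have "\<dots> \<le> diff d f Or + t + t * length a" using diff_step[OF assms] by simp
  finally show ?case by simp
qed

definition ind :: "bool \<Rightarrow> real" where "ind b = (if b then 1 else 0)"

lemma ind_card: "finite A \<Longrightarrow> (\<Sum>x\<in>A. ind (P x)) = real (card {x\<in>A. P x})"
  unfolding ind_def by (rule sum_ind)

lemma ind_or: "ind (a \<or> b) \<le> ind a + ind b" by (simp add: ind_def)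
lemma ind_nonneg: "ind a \<ge> 0" by (simp add: ind_def)

lemma gen_count:
  assumes U: "finite U" and adv: "valid_adversary d t adv"
    and len: "\<And>u. u \<in> U \<Longrightarrow> length (\<phi> u) = l"
    and per: "\<And>Or h. diff d f Or \<le> t * length h \<Longrightarrow> length h + l \<le> Q \<Longrightarrow>
                 (\<Sum>u\<in>U. ind (bad adv f Or h (\<phi> u))) \<le> \<delta> * real (card U)"
  shows "diff d f Or \<le> t * length h \<Longrightarrow> length h + n * l \<le> Q \<Longrightarrow>
     (\<Sum>us\<in>LL U n. ind (bad adv f Or h (concat (map \<phi> us)))) \<le> n * \<delta> * real (card U) ^ n"
proof (induction n arbitrary: Or h)
  case 0 then show ?case by (simp add: ind_def)
next
  case (Suc n)
  have "(\<Sum>us\<in>LL U (Suc n). ind (bad adv f Or h (concat (map \<phi> us))))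
      = (\<Sum>u\<in>U. \<Sum>us\<in>LL U n. ind (bad adv f Or h (\<phi> u @ concat (map \<phi> us))))"
    by (simp add: sum_LL_Suc[OF U])
  also have "\<dots> \<le> (\<Sum>u\<in>U. \<Sum>us\<in>LL U n. ind (bad adv f Or h (\<phi> u)) +
        ind (bad adv f (fst (st adv Or h (\<phi> u))) (snd (st adv Or h (\<phi> u))) (concat (map \<phi> us))))"
    by (intro sum_mono) (simp add: bad_append ind_or)
  also have "\<dots> = (\<Sum>u\<in>U. real (card (LL U n)) * ind (bad adv f Or h (\<phi> u))) +
        (\<Sum>u\<in>U. \<Sum>us\<in>LL U n. ind (bad adv f (fst (st adv Or h (\<phi> u))) (snd (st adv Or h (\<phi> u))) (concat (map \<phi> us))))"
    by (simp add: sum.distrib)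
  also have "\<dots> \<le> real (card U) ^ n * (\<delta> * real (card U)) + (\<Sum>u\<in>U. n * \<delta> * real (card U) ^ n)"
  proof (rule add_mono)
    have "(\<Sum>u\<in>U. real (card (LL U n)) * ind (bad adv f Or h (\<phi> u))) = real (card U) ^ n * (\<Sum>u\<in>U. ind (bad adv f Or h (\<phi> u)))"
      by (simp add: card_LL[OF U] sum_distrib_left)
    also have "\<dots> \<le> real (card U) ^ n * (\<delta> * real (card U))"
      by (rule mult_left_mono) (use Suc.prems in \<open>auto intro!: per\<close>)
    finally show "(\<Sum>u\<in>U. real (card (LL U n)) * ind (bad adv f Or h (\<phi> u))) \<le> real (card U) ^ n * (\<delta> * real (card U))" .
  next
    show "(\<Sum>u\<in>U. \<Sum>us\<in>LL U n. ind (bad adv f (fst (st adv Or h (\<phi> u))) (snd (st adv Or h (\<phi> u))) (concat (map \<phi> us))))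
        \<le> (\<Sum>u\<in>U. n * \<delta> * real (card U) ^ n)"
    proof (rule sum_mono)
      fix u assume u: "u \<in> U"
      show "(\<Sum>us\<in>LL U n. ind (bad adv f (fst (st adv Or h (\<phi> u))) (snd (st adv Or h (\<phi> u))) (concat (map \<phi> us))))
          \<le> n * \<delta> * real (card U) ^ n"
      proof (rule Suc.IH)
        show "diff d f (fst (st adv Or h (\<phi> u))) \<le> t * length (snd (st adv Or h (\<phi> u)))"
          using diff_st[OF adv, of f Or h "\<phi> u"] Suc.prems(1) len[OF u] by (simp add: st_len algebra_simps)
        show "length (snd (st adv Or h (\<phi> u))) + n * l \<le> Q"
          using Suc.prems(2) len[OF u] by (simp add: st_len)
      qed
    qed
  qed
  also have "\<dots> = Suc n * \<delta> * real (card U) ^ Suc n" by (simp add: algebra_simps)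
  finally show ?case .
qed



lemma concat_single: "concat (map (\<lambda>x. [x]) xs) = xs" by (induction xs) auto

lemma inner_count:
  assumes adv: "valid_adversary d t adv" and h: "diff d f Or \<le> t * length h" "length h + k \<le> Q"
  shows "(\<Sum>xs\<in>LL (cube d) k. ind (bad adv f Or h xs)) \<le> k * (real t * real Q / 2 ^ d) * 2 ^ (d * k)"
proof -
  have "(\<Sum>us\<in>LL (cube d) k. ind (bad adv f Or h (concat (map (\<lambda>x. [x]) us)))) \<le> k * (real t * real Q / 2 ^ d) * real (card (cube d)) ^ k"
  proof (rule gen_count[OF finite_cube adv, where l=1 and Q=Q])
    fix Or :: "bool list \<Rightarrow> bool" and h :: "(bool list \<times> bool) list"
    assume a: "diff d f Or \<le> t * length h" "length h + 1 \<le> Q"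
    have "(\<Sum>u\<in>cube d. ind (bad adv f Or h [u])) = real (diff d f Or)"
      by (simp add: ind_card diff_def)
    also have "\<dots> \<le> real t * real Q"
    proof -
      have "diff d f Or \<le> t * Q" using a by (meson add_leD1 le_trans mult_le_mono2)
      then show ?thesis by (metis of_nat_le_iff of_nat_mult)
    qed
    also have "\<dots> = real t * real Q / 2 ^ d * real (card (cube d))" by (simp add: card_cube)
    finally show "(\<Sum>u\<in>cube d. ind (bad adv f Or h [u])) \<le> real t * real Q / 2 ^ d * real (card (cube d))" .
  qed (use h in auto)
  then show ?thesis by (simp add: concat_single card_cube power_mult)
qed

lemma vec_eq: "length a = length b \<Longrightarrow> (\<forall>i<length a. a!i = b!i) \<Longrightarrow> a = b"
  by (simp add: list_eq_iff_nth_eq)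

lemma xv1: "length x = d \<Longrightarrow> length m = d \<Longrightarrow> length m' = d \<Longrightarrow> xorl (xorl x m) (xorl x m') = xorl m m'"
  by (intro vec_eq) (auto simp: nth_xorl)
lemma xv2: "length x = d \<Longrightarrow> length m = d \<Longrightarrow> length m' = d \<Longrightarrow> xorl (xorl x m) m' = xorl x (xorl m m')"
  by (intro vec_eq) (auto simp: nth_xorl)
lemma xv3: "length x = d \<Longrightarrow> length m = d \<Longrightarrow> length m' = d \<Longrightarrow> xorl m (xorl x m') = xorl x (xorl m m')"
  by (intro vec_eq) (auto simp: nth_xorl)
lemma xv4: "length x = d \<Longrightarrow> length m = d \<Longrightarrow> length a = d \<Longrightarrow> (xorl x m = a) = (x = xorl a m)"
  by (auto simp: list_eq_iff_nth_eq nth_xorl)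

lemma msum_xorl:
  assumes "set xs \<subseteq> cube d" "length M = length xs" "length M' = length xs"
  shows "msum d (xorl M M') xs = xorl (msum d M xs) (msum d M' xs)"
  using assms
proof (induction xs arbitrary: M M')
  case Nil then show ?case by (simp add: xorl_self[of "zero d", simplified])
next
  case (Cons x xs)
  obtain b M1 where M: "M = b # M1" using Cons.prems by (cases M) auto
  obtain b' M1' where M': "M' = b' # M1'" using Cons.prems by (cases M') auto
  have IH: "msum d (xorl M1 M1') xs = xorl (msum d M1 xs) (msum d M1' xs)"
    using Cons M M' by auto
  have lx: "length x = d" using Cons.prems by (auto simp: cube_def)
  have l1: "length (msum d M1 xs) = d" "length (msum d M1' xs) = d"
    using Cons.prems length_msum by auto
  show ?case
  proof (cases b; cases b')
    assume "b" "b'"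
    then show ?thesis using IH M M' xv1[OF lx l1] by simp
  next
    assume "b" "\<not> b'"
    then show ?thesis using IH M M' xv2[OF lx l1] by simp
  next
    assume "\<not> b" "b'"
    then show ?thesis using IH M M' xv3[OF lx l1] by simp
  next
    assume "\<not> b" "\<not> b'"
    then show ?thesis using IH M M' by simp
  qed
qed

lemma par_xorl: "length S = length S0 \<Longrightarrow> par (xorl S S0) = (par S \<noteq> par S0)"
  by (induction S S0 rule: xorl.induct) auto

lemma mask_xorl: "length S = length S0 \<Longrightarrow> mask (xorl S S0) = xorl (mask S) (mask S0)"
  by (simp add: mask_def par_xorl)

lemma length_mask[simp]: "length (mask S) = Suc (length S)" by (simp add: mask_def)

definition Z :: "nat \<Rightarrow> nat \<Rightarrow> bool list list \<Rightarrow> nat" where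
  "Z d k' xs = card {T\<in>cube k'. msum d (mask T) xs = zero d}"

lemma fiber:
  assumes xs: "xs \<in> LL (cube d) (Suc k')"
  shows "card {S\<in>cube k'. msum d (mask S) xs = a} \<le> Z d k' xs"
proof (cases "{S\<in>cube k'. msum d (mask S) xs = a} = {}")
  case True show ?thesis unfolding True by simp
next
  case False
  then obtain S0 where S0: "S0 \<in> cube k'" "msum d (mask S0) xs = a" by blast
  have sx: "set xs \<subseteq> cube d" "length xs = Suc k'" using xs by (auto simp: LL_def)
  show ?thesis unfolding Z_def
  proof (rule card_inj_on_le[where f="\<lambda>S. xorl S S0"])
    show "inj_on (\<lambda>S. xorl S S0) {S\<in>cube k'. msum d (mask S) xs = a}"
    proof (rule inj_onI)
      fix x y assume x: "x \<in> {S\<in>cube k'. msum d (mask S) xs = a}" and y: "y \<in> {S\<in>cube k'. msum d (mask S) xs = a}"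
        and e: "xorl x S0 = xorl y S0"
      have lx: "length x = length S0" "length y = length S0" using x y S0 by (auto simp: cube_def)
      have "x = xorl (xorl x S0) S0" using lx by (simp add: xorl_cancel2)
      also have "\<dots> = xorl (xorl y S0) S0" using e by simp
      also have "\<dots> = y" using lx by (simp add: xorl_cancel2)
      finally show "x = y" .
    qed
    show "(\<lambda>S. xorl S S0) ` {S\<in>cube k'. msum d (mask S) xs = a} \<subseteq> {T\<in>cube k'. msum d (mask T) xs = zero d}"
    proof (rule image_subsetI)
      fix S assume "S \<in> {S\<in>cube k'. msum d (mask S) xs = a}"
      then have S: "S \<in> cube k'" "msum d (mask S) xs = a" by auto
      have c: "xorl S S0 \<in> cube k'" using S S0 by (simp add: cube_def)
      have "msum d (mask (xorl S S0)) xs = xorl (msum d (mask S) xs) (msum d (mask S0) xs)"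
        using S S0 sx by (simp add: mask_xorl msum_xorl cube_def)
      also have "\<dots> = zero d" using S(2) S0(2) xorl_self[of a] length_msum[OF sx(1), of "mask S"] by simp
      finally show "xorl S S0 \<in> {T\<in>cube k'. msum d (mask T) xs = zero d}" using c by simp
    qed
  qed simp
qed

lemma fiberD:
  assumes xs: "xs \<in> LL (cube d) (Suc k')" and D: "finite D"
  shows "card {S\<in>cube k'. msum d (mask S) xs \<in> D} \<le> card D * Z d k' xs"
proof -
  have "{S\<in>cube k'. msum d (mask S) xs \<in> D} = (\<Union>a\<in>D. {S\<in>cube k'. msum d (mask S) xs = a})" by auto
  then have "card {S\<in>cube k'. msum d (mask S) xs \<in> D} \<le> (\<Sum>a\<in>D. card {S\<in>cube k'. msum d (mask S) xs = a})"
    using card_UN_le[OF D] by simp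
  also have "\<dots> \<le> (\<Sum>a\<in>D. Z d k' xs)" by (rule sum_mono) (rule fiber[OF xs])
  finally show ?thesis by simp
qed

lemma count_fiber:
  assumes "True \<in> set M" "a \<in> cube d"
  shows "(\<Sum>xs\<in>LL (cube d) (length M). ind (msum d M xs = a)) = 2 ^ (d * (length M - 1))"
  using assms(1)
proof (induction M)
  case Nil then show ?case by simp
next
  case (Cons b M)
  show ?case
  proof (cases b)
    case True
    have "(\<Sum>xs\<in>LL (cube d) (length (b#M)). ind (msum d (b#M) xs = a))
        = (\<Sum>x\<in>cube d. \<Sum>xs\<in>LL (cube d) (length M). ind (xorl x (msum d M xs) = a))"
      using True by (simp add: sum_LL_Suc)
    also have "\<dots> = (\<Sum>xs\<in>LL (cube d) (length M). \<Sum>x\<in>cube d. ind (xorl x (msum d M xs) = a))"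
      by (rule sum.swap)
    also have "\<dots> = (\<Sum>xs\<in>LL (cube d) (length M). 1)"
    proof (rule sum.cong)
      fix xs assume xs: "xs \<in> LL (cube d) (length M)"
      then have lm: "length (msum d M xs) = d" using length_msum by (auto simp: LL_def)
      have "(\<Sum>x\<in>cube d. ind (xorl x (msum d M xs) = a)) = (\<Sum>x\<in>cube d. ind (x = xorl a (msum d M xs)))"
        by (rule sum.cong) (use lm assms(2) in \<open>auto simp: cube_def xv4\<close>)
      also have "\<dots> = 1"
      proof -
        have "xorl a (msum d M xs) \<in> cube d" using lm assms(2) by (simp add: cube_def)
        then show ?thesis by (simp add: ind_def sum.delta)
      qed
      finally show "(\<Sum>x\<in>cube d. ind (xorl x (msum d M xs) = a)) = 1" .
    qed simp
    finally show ?thesis by (simp add: card_LL card_cube power_mult)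
  next
    case False
    then have M: "True \<in> set M" using Cons.prems by auto
    then have "length M \<ge> 1" by (cases M) auto
    have "(\<Sum>xs\<in>LL (cube d) (length (b#M)). ind (msum d (b#M) xs = a))
        = (\<Sum>x\<in>cube d. \<Sum>xs\<in>LL (cube d) (length M). ind (msum d M xs = a))"
      using False by (simp add: sum_LL_Suc)
    also have "\<dots> = 2 ^ d * 2 ^ (d * (length M - 1))" using Cons.IH[OF M] by (simp add: card_cube)
    also have "\<dots> = 2 ^ (d * (length (b#M) - 1))"
    proof -
      have "d * (length (b#M) - 1) = d + d * (length M - 1)" using \<open>length M \<ge> 1\<close> by (cases "length M") auto
      then show ?thesis by (simp only: power_add)
    qed
    finally show ?thesis .
  qed
qed

lemma msum_false: "msum d (replicate n False) xs = zero d"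
  by (induction n arbitrary: xs) (auto, case_tac xs, auto)

lemma par_false: "par (replicate n False) = False" by (induction n) auto

lemma sum_Z:
  "(\<Sum>xs\<in>LL (cube d) (Suc k'). real (Z d k' xs)) \<le> 2 ^ (d * Suc k') + 2 ^ k' * 2 ^ (d * k')"
proof -
  let ?L = "LL (cube d) (Suc k')"
  have "(\<Sum>xs\<in>?L. real (Z d k' xs)) = (\<Sum>xs\<in>?L. \<Sum>T\<in>cube k'. ind (msum d (mask T) xs = zero d))"
    by (simp add: Z_def ind_card)
  also have "\<dots> = (\<Sum>T\<in>cube k'. \<Sum>xs\<in>?L. ind (msum d (mask T) xs = zero d))"
    by (rule sum.swap)
  also have "\<dots> = (\<Sum>xs\<in>?L. ind (msum d (mask (zero k')) xs = zero d)) +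
       (\<Sum>T\<in>cube k' - {zero k'}. \<Sum>xs\<in>?L. ind (msum d (mask T) xs = zero d))"
    by (rule sum.remove) auto
  also have "\<dots> = 2 ^ (d * Suc k') + (\<Sum>T\<in>cube k' - {zero k'}. 2 ^ (d * k'))"
  proof -
    have m0: "mask (zero k') = replicate (Suc k') False" by (simp add: mask_def zero_def par_false)
    have "(\<Sum>xs\<in>?L. ind (msum d (mask (zero k')) xs = zero d)) = 2 ^ (d * Suc k')"
    proof -
      have mz: "msum d (mask (zero k')) xs = zero d" for xs by (simp only: m0 msum_false)
      show ?thesis by (simp add: mz ind_def card_LL card_cube power_mult power_add)
    qed
    moreover have "(\<Sum>xs\<in>?L. ind (msum d (mask T) xs = zero d)) = 2 ^ (d * k')"
      if T: "T \<in> cube k' - {zero k'}" for T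
    proof -
      have "True \<in> set T"
      proof (rule ccontr)
        assume "True \<notin> set T"
        then have "\<forall>x\<in>set T. x = False" by auto
        then have "T = replicate (length T) False"
          by (simp add: replicate_length_same)
        then show False using T by (simp add: cube_def zero_def)
      qed
      then have "True \<in> set (mask T)" by (simp add: mask_def)
      from count_fiber[OF this zero_cube[of d]] T show ?thesis by (simp add: cube_def)
    qed
    ultimately show ?thesis by simp
  qed
  also have "\<dots> \<le> 2 ^ (d * Suc k') + 2 ^ k' * 2 ^ (d * k')"
  proof -
    have "card (cube k' - {zero k'}) \<le> 2 ^ k'" using card_cube[of k'] card_Diff1_le[of "cube k'" "zero k'"] by simp
    then have "real (card (cube k' - {zero k'})) \<le> real (2 ^ k')" by (rule of_nat_mono)
    then have "real (card (cube k' - {zero k'})) \<le> 2 ^ k'" by simp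
    then show ?thesis by (simp add: mult_right_mono)
  qed
  finally show ?thesis .
qed



definition blockq :: "nat \<Rightarrow> bool list list \<times> bool list \<Rightarrow> bool list list" where
  "blockq d w = fst w @ [msum d (mask (snd w)) (fst w)]"

definition Blk :: "nat \<Rightarrow> nat \<Rightarrow> (bool list list \<times> bool list) set" where
  "Blk d k' = LL (cube d) (Suc k') \<times> cube k'"

lemma finite_Blk[simp]: "finite (Blk d k')" by (simp add: Blk_def)

lemma card_Blk: "card (Blk d k') = 2 ^ (d * Suc k') * 2 ^ k'"
  by (simp add: Blk_def card_cartesian_product card_LL card_cube power_mult power_add)

lemma length_blockq: "w \<in> Blk d k' \<Longrightarrow> length (blockq d w) = Suc k' + 1"
  by (auto simp: Blk_def blockq_def LL_def)

lemma block_count: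
  assumes adv: "valid_adversary d t adv" and h: "diff d f Or \<le> t * length h" "length h + (Suc k' + 1) \<le> Q"
  shows "(\<Sum>w\<in>Blk d k'. ind (bad adv f Or h (blockq d w)))
     \<le> ((Suc k' + 1) * (real t * real Q) / 2 ^ d + 2 * (real t * real Q) / 2 ^ Suc k') * real (card (Blk d k'))"
proof -
  let ?L = "LL (cube d) (Suc k')"
  define N where "N = real t * real Q"
  define O' where "O' xs = fst (st adv Or h xs)" for xs
  define D where "D xs = {x\<in>cube d. O' xs x \<noteq> f x}" for xs
  have cardD: "real (card (D xs)) \<le> N" if xs: "xs \<in> ?L" for xs
  proof -
    have "card (D xs) \<le> diff d f Or + t * length xs" unfolding D_def O'_def diff_def[symmetric] by (rule diff_st[OF adv])
    also have "\<dots> \<le> t * Q"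
    proof -
      have "length h + length xs \<le> Q" using h xs by (simp add: LL_def)
      then have e1: "t * (length h + length xs) \<le> t * Q" by (rule mult_le_mono2)
      show ?thesis using h(1) e1 by (simp add: add_mult_distrib2)
    qed
    finally have "card (D xs) \<le> t * Q" .
    then have "real (card (D xs)) \<le> real (t * Q)" by (rule of_nat_mono)
    then show ?thesis by (simp add: N_def)
  qed
  have step: "ind (bad adv f Or h (blockq d (xs, S))) \<le> ind (bad adv f Or h xs) + ind (msum d (mask S) xs \<in> D xs)"
    if xs: "xs \<in> ?L" for xs S
  proof -
    have "msum d (mask S) xs \<in> cube d" using xs by (intro msum_cube) (auto simp: LL_def)
    then show ?thesis unfolding blockq_def using bad_append[of adv f Or h xs]
      by (simp add: ind_def D_def O'_def)
  qed
  have "(\<Sum>w\<in>Blk d k'. ind (bad adv f Or h (blockq d w))) = (\<Sum>xs\<in>?L. \<Sum>S\<in>cube k'. ind (bad adv f Or h (blockq d (xs, S))))"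
    by (simp add: Blk_def sum.cartesian_product split_def)
  also have "\<dots> \<le> (\<Sum>xs\<in>?L. \<Sum>S\<in>cube k'. ind (bad adv f Or h xs) + ind (msum d (mask S) xs \<in> D xs))"
    by (intro sum_mono step) auto
  also have "\<dots> = (\<Sum>xs\<in>?L. 2 ^ k' * ind (bad adv f Or h xs) + real (card {S\<in>cube k'. msum d (mask S) xs \<in> D xs}))"
    by (simp add: sum.distrib ind_card card_cube)
  also have "\<dots> \<le> (\<Sum>xs\<in>?L. 2 ^ k' * ind (bad adv f Or h xs) + N * real (Z d k' xs))"
  proof (intro sum_mono add_left_mono)
    fix xs assume xs: "xs \<in> ?L"
    have "card {S\<in>cube k'. msum d (mask S) xs \<in> D xs} \<le> card (D xs) * Z d k' xs"
      by (rule fiberD[OF xs]) (simp add: D_def)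
    then have "real (card {S\<in>cube k'. msum d (mask S) xs \<in> D xs}) \<le> real (card (D xs) * Z d k' xs)"
      by (rule of_nat_mono)
    then have "real (card {S\<in>cube k'. msum d (mask S) xs \<in> D xs}) \<le> real (card (D xs)) * real (Z d k' xs)"
      by simp
    also have "\<dots> \<le> N * real (Z d k' xs)" using cardD[OF xs] by (rule mult_right_mono) simp
    finally show "real (card {S\<in>cube k'. msum d (mask S) xs \<in> D xs}) \<le> N * real (Z d k' xs)" .
  qed
  also have "\<dots> = 2 ^ k' * (\<Sum>xs\<in>?L. ind (bad adv f Or h xs)) + N * (\<Sum>xs\<in>?L. real (Z d k' xs))"
    by (simp add: sum.distrib sum_distrib_left)
  also have "\<dots> \<le> 2 ^ k' * (Suc k' * (N / 2 ^ d) * 2 ^ (d * Suc k')) + N * (2 ^ (d * Suc k') + 2 ^ k' * 2 ^ (d * k'))"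
  proof (rule add_mono)
    show "2 ^ k' * (\<Sum>xs\<in>?L. ind (bad adv f Or h xs)) \<le> 2 ^ k' * (Suc k' * (N / 2 ^ d) * 2 ^ (d * Suc k'))"
    proof -
      have I: "(\<Sum>xs\<in>?L. ind (bad adv f Or h xs)) \<le> Suc k' * (N / 2 ^ d) * 2 ^ (d * Suc k')"
        unfolding N_def by (rule inner_count[OF adv h(1)]) (use h(2) in simp)
      show ?thesis by (rule mult_left_mono[OF I]) simp
    qed
    have "N \<ge> 0" by (simp add: N_def)
    then show "N * (\<Sum>xs\<in>?L. real (Z d k' xs)) \<le> N * (2 ^ (d * Suc k') + 2 ^ k' * 2 ^ (d * k'))"
      by (rule mult_left_mono[OF sum_Z])
  qed
  also have "\<dots> = ((Suc k' + 1) * N / 2 ^ d + 2 * N / 2 ^ Suc k') * real (card (Blk d k'))"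
    by (simp add: card_Blk power_add field_simps)
  finally show ?thesis by (simp add: N_def)
qed



definition qsq :: "nat \<Rightarrow> (bool list list \<times> bool list) list \<Rightarrow> bool list list" where
  "qsq d ws = concat (map (blockq d) ws)"

fun decide :: "(bool list list \<times> bool list) list \<Rightarrow> bool list \<Rightarrow> bool" where
  "decide [] ans = True"
| "decide (w # ws) ans = (ans ! length (fst w) = ip (mask (snd w)) (take (length (fst w)) ans)
      \<and> decide ws (drop (Suc (length (fst w))) ans))"

definition Tst :: "nat \<Rightarrow> nat \<Rightarrow> nat \<Rightarrow> (bool list list \<times> (bool list \<Rightarrow> bool)) pmf" where
  "Tst d m k' = map_pmf (\<lambda>ws. (qsq d ws, decide ws)) (pmf_of_set (LL (Blk d k') m))"

definition blockok :: "nat \<Rightarrow> (bool list \<Rightarrow> bool) \<Rightarrow> bool list list \<times> bool list \<Rightarrow> bool" where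
  "blockok d f w = (f (msum d (mask (snd w)) (fst w)) = ip (mask (snd w)) (map f (fst w)))"

lemma Blk_ne: "Blk d k' \<noteq> {}"
proof -
  have "card (Blk d k') > 0" by (simp add: card_Blk)
  then show ?thesis by auto
qed

lemma LL_ne: "LL (Blk d k') m \<noteq> {}"
proof -
  have "card (LL (Blk d k') m) > 0" using Blk_ne[of d k'] by (simp add: card_LL card_gt_0_iff)
  then show ?thesis by auto
qed

lemma accept_Tst: "accept_prob (Tst d m k') adv f =
   real (card {ws\<in>LL (Blk d k') m. decide ws (run_oracle adv f [] (qsq d ws))}) / real (card (LL (Blk d k') m))"
proof -
  have "accept_prob (Tst d m k') adv f = measure (pmf_of_set (LL (Blk d k') m)) {ws. decide ws (run_oracle adv f [] (qsq d ws))}"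
    unfolding accept_prob_def Tst_def by (simp add: vimage_def)
  also have "\<dots> = real (card (LL (Blk d k') m \<inter> {ws. decide ws (run_oracle adv f [] (qsq d ws))})) / real (card (LL (Blk d k') m))"
    by (rule measure_pmf_of_set[OF LL_ne finite_LL[OF finite_Blk]])
  finally show ?thesis by (simp add: Int_def conj_commute)
qed

lemma set_Tst: "(qs, dec) \<in> set_pmf (Tst d m k') \<Longrightarrow> set qs \<subseteq> cube d \<and> length qs = m * (Suc k' + 1)"
proof -
  assume "(qs, dec) \<in> set_pmf (Tst d m k')"
  then obtain ws where ws: "ws \<in> LL (Blk d k') m" "qs = qsq d ws"
    unfolding Tst_def using set_pmf_of_set[OF LL_ne finite_LL[OF finite_Blk]] by auto
  have "set (blockq d w) \<subseteq> cube d" if "w \<in> Blk d k'" for w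
    using that by (auto simp: Blk_def blockq_def LL_def intro!: msum_cube)
  moreover have "length (concat (map (blockq d) ws)) = m * (Suc k' + 1)"
  proof -
    have "length (concat (map (blockq d) ws)) = (\<Sum>w\<leftarrow>ws. length (blockq d w))" by (simp add: length_concat comp_def)
    also have "\<dots> = (\<Sum>w\<leftarrow>ws. Suc k' + 1)"
      by (rule arg_cong[where f=sum_list], rule map_cong) (use ws in \<open>auto simp: LL_def length_blockq\<close>)
    also have "\<dots> = m * (Suc k' + 1)" using ws by (simp add: LL_def sum_list_triv)
    finally show ?thesis .
  qed
  ultimately show ?thesis using ws by (auto simp: qsq_def LL_def)
qed

lemma decide_map: "set ws \<subseteq> Blk d k' \<Longrightarrow> decide ws (map f (qsq d ws)) = (\<forall>w\<in>set ws. blockok d f w)"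
proof (induction ws)
  case Nil then show ?case by (simp add: qsq_def)
next
  case (Cons w ws)
  obtain xs S where w: "w = (xs, S)" by (cases w)
  have "map f (qsq d (w # ws)) = map f xs @ [f (msum d (mask S) xs)] @ map f (qsq d ws)"
    by (simp add: qsq_def blockq_def w)
  then show ?case using Cons by (simp add: w blockok_def nth_append)
qed

lemma bad_total:
  assumes adv: "valid_adversary d t adv"
  shows "(\<Sum>ws\<in>LL (Blk d k') m. ind (bad adv f f [] (qsq d ws)))
    \<le> m * (((Suc k' + 1) * (real t * real (m * (Suc k' + 1))) / 2 ^ d + 2 * (real t * real (m * (Suc k' + 1))) / 2 ^ Suc k'))
        * real (card (Blk d k')) ^ m"
  unfolding qsq_def
proof (rule gen_count[OF finite_Blk adv, where l="Suc k' + 1" and Q="m * (Suc k' + 1)"])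
  show "length (blockq d u) = Suc k' + 1" if "u \<in> Blk d k'" for u using length_blockq[OF that] .
  fix Or :: "bool list \<Rightarrow> bool" and h :: "(bool list \<times> bool) list"
  assume "diff d f Or \<le> t * length h" "length h + (Suc k' + 1) \<le> m * (Suc k' + 1)"
  then show "(\<Sum>u\<in>Blk d k'. ind (bad adv f Or h (blockq d u)))
      \<le> ((Suc k' + 1) * (real t * real (m * (Suc k' + 1))) / 2 ^ d + 2 * (real t * real (m * (Suc k' + 1))) / 2 ^ Suc k') * real (card (Blk d k'))"
    by (rule block_count[OF adv])
qed (auto simp: diff_def)

lemma wt_Cons: "wt (b # S) = wt S + (if b then 1 else 0)" by (simp add: wt_def)

lemma par_wt: "par S = odd (wt S)" by (induction S) (simp add: wt_def, simp add: wt_Cons)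

lemma wt_mask_even: "even (wt (mask S))" by (simp add: mask_def wt_Cons par_wt)

lemma wt_mask_ge2: "True \<in> set S \<Longrightarrow> wt (mask S) \<ge> 2"
proof -
  assume "True \<in> set S"
  then have "filter id S \<noteq> []" by (auto simp: filter_empty_conv)
  then have "wt S \<ge> 1" by (simp add: wt_def Suc_le_eq)
  moreover have "wt (mask S) \<ge> wt S" by (simp add: mask_def wt_Cons)
  ultimately show ?thesis using wt_mask_even[of S] by presburger
qed

lemma complete_block: assumes "linear_fn d f" "w \<in> Blk d k'" shows "blockok d f w"
proof -
  obtain xs S where w: "w = (xs, S)" by (cases w)
  have h: "set xs \<subseteq> cube d" "length xs = Suc k'" "length S = k'" using assms(2) w by (auto simp: Blk_def LL_def cube_def)
  show ?thesis using lin_msum[OF assms(1) h(1), of "mask S"] h by (simp add: blockok_def w)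
qed



lemma sound_block:
  assumes far: "eps_far_linear d e f" and e: "0 < e" "e < 1" and k: "k' \<ge> 1"
  shows "real (card {w\<in>Blk d k'. blockok d f w}) \<le> (1 - e/4) * real (card (Blk d k'))"
proof -
  let ?L = "LL (cube d) (Suc k')"
  define P :: real where "P = 2 ^ (d * Suc k')"
  define K :: real where "K = 2 ^ k'"
  let ?g = "\<lambda>S. real (card {xs\<in>?L. f (msum d (mask S) xs) = ip (mask S) (map f xs)})"
  have "real (card {w\<in>Blk d k'. blockok d f w}) = (\<Sum>w\<in>Blk d k'. ind (blockok d f w))"
    by (simp add: ind_card)
  also have "\<dots> = (\<Sum>xs\<in>?L. \<Sum>S\<in>cube k'. ind (blockok d f (xs, S)))"
    by (simp add: Blk_def sum.cartesian_product split_def)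
  also have "\<dots> = (\<Sum>S\<in>cube k'. \<Sum>xs\<in>?L. ind (blockok d f (xs, S)))" by (rule sum.swap)
  also have "\<dots> = (\<Sum>S\<in>cube k'. ?g S)" by (simp add: ind_card blockok_def)
  also have "\<dots> = ?g (zero k') + (\<Sum>S\<in>cube k' - {zero k'}. ?g S)" by (rule sum.remove) auto
  also have "\<dots> \<le> P + (\<Sum>S\<in>cube k' - {zero k'}. (1 - e/2) * P)"
  proof (rule add_mono)
    have "card {xs\<in>?L. f (msum d (mask (zero k')) xs) = ip (mask (zero k')) (map f xs)} \<le> card ?L"
      by (rule card_mono) auto
    then have "?g (zero k') \<le> real (card ?L)" by (rule of_nat_mono)
    then show "?g (zero k') \<le> P" by (simp add: P_def card_LL card_cube power_mult power_add)
    show "(\<Sum>S\<in>cube k' - {zero k'}. ?g S) \<le> (\<Sum>S\<in>cube k' - {zero k'}. (1 - e/2) * P)"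
    proof (rule sum_mono)
      fix S assume S: "S \<in> cube k' - {zero k'}"
      have "True \<in> set S"
      proof (rule ccontr)
        assume "True \<notin> set S"
        then have "\<forall>x\<in>set S. x = False" by auto
        then have "S = replicate (length S) False" by (simp add: replicate_length_same)
        then show False using S by (simp add: cube_def zero_def)
      qed
      have lS: "length (mask S) = Suc k'" using S by (simp add: cube_def)
      have X: "real (card {xs\<in>LL (cube d) (length (mask S)). f (msum d (mask S) xs) = ip (mask S) (map f xs)})
           \<le> (1 - e/2) * 2 ^ (d * length (mask S))"
        by (rule sound_count[OF far e wt_mask_even wt_mask_ge2[OF \<open>True \<in> set S\<close>]])
      show "?g S \<le> (1 - e/2) * P" using X[unfolded lS] by (simp only: P_def)
    qed
  qed
  also have "\<dots> = P + (K - 1) * ((1 - e/2) * P)"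
  proof -
    have "card (cube k' - {zero k'}) = 2 ^ k' - 1" by (simp add: card_cube)
    then have "real (card (cube k' - {zero k'})) = K - 1"
      by (simp add: K_def of_nat_diff)
    then show ?thesis by simp
  qed
  also have "\<dots> \<le> (1 - e/4) * (P * K)"
  proof -
    have "(2::real) ^ 1 \<le> 2 ^ k'" by (rule power_increasing) (use k in auto)
    then have K2: "K \<ge> 2" unfolding K_def by simp
    have P0: "P \<ge> 0" by (simp add: P_def)
    have "P + (K - 1) * ((1 - e/2) * P) = P * (K - (K - 1) * e / 2)" by (simp add: algebra_simps)
    also have "\<dots> \<le> P * (K - K * e / 4)"
    proof (rule mult_left_mono[OF _ P0])
      have "e * (K - 2) \<ge> 0" using K2 e by simp
      moreover have "K - K * e / 4 - (K - (K - 1) * e / 2) = e * (K - 2) / 4" by (simp add: field_simps)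
      ultimately show "K - (K - 1) * e / 2 \<le> K - K * e / 4" by linarith
    qed
    also have "\<dots> = (1 - e/4) * (P * K)" by (simp add: algebra_simps)
    finally show ?thesis .
  qed
  also have "\<dots> = (1 - e/4) * real (card (Blk d k'))" by (simp add: card_Blk P_def K_def)
  finally show ?thesis .
qed

lemma complete_prob:
  assumes lin: "linear_fn d f" and adv: "valid_adversary d t adv"
  shows "accept_prob (Tst d m k') adv f \<ge> 1 - m * (((Suc k' + 1) * (real t * real (m * (Suc k' + 1))) / 2 ^ d
           + 2 * (real t * real (m * (Suc k' + 1))) / 2 ^ Suc k'))"
    (is "_ \<ge> 1 - ?b")
proof -
  let ?O = "LL (Blk d k') m"
  have cO: "real (card ?O) > 0" using LL_ne[of d k' m] by (simp add: card_gt_0_iff)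
  have sub: "{ws\<in>?O. \<not> bad adv f f [] (qsq d ws)} \<subseteq> {ws\<in>?O. decide ws (run_oracle adv f [] (qsq d ws))}"
  proof safe
    fix ws assume ws: "ws \<in> ?O" "\<not> bad adv f f [] (qsq d ws)"
    have "set ws \<subseteq> Blk d k'" using ws by (simp add: LL_def)
    then show "decide ws (run_oracle adv f [] (qsq d ws))"
      using run_good[OF ws(2)] decide_map complete_block[OF lin] by auto
  qed
  have "real (card {ws\<in>?O. \<not> bad adv f f [] (qsq d ws)}) \<le> real (card {ws\<in>?O. decide ws (run_oracle adv f [] (qsq d ws))})"
    by (rule of_nat_mono, rule card_mono) (use sub in auto)
  moreover have "real (card {ws\<in>?O. \<not> bad adv f f [] (qsq d ws)}) = (\<Sum>ws\<in>?O. 1 - ind (bad adv f f [] (qsq d ws)))"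
    by (simp add: ind_card[symmetric] ind_def if_distrib) (rule sum.cong, auto)
  moreover have "(\<Sum>ws\<in>?O. 1 - ind (bad adv f f [] (qsq d ws))) \<ge> real (card ?O) - ?b * real (card ?O)"
    using bad_total[OF adv, of f k' m] by (simp add: sum_subtractf card_LL)
  ultimately have "real (card {ws\<in>?O. decide ws (run_oracle adv f [] (qsq d ws))}) \<ge> (1 - ?b) * real (card ?O)"
    by (simp add: algebra_simps)
  then show ?thesis unfolding accept_Tst using cO by (simp add: field_simps)
qed

lemma sound_prob:
  assumes far: "eps_far_linear d e f" and e: "0 < e" "e < 1" and k: "k' \<ge> 1"
    and adv: "valid_adversary d t adv"
  shows "accept_prob (Tst d m k') adv f \<le> m * (((Suc k' + 1) * (real t * real (m * (Suc k' + 1))) / 2 ^ d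
           + 2 * (real t * real (m * (Suc k' + 1))) / 2 ^ Suc k')) + (1 - e/4) ^ m"
    (is "_ \<le> ?b + _")
proof -
  let ?O = "LL (Blk d k') m"
  let ?G = "{w\<in>Blk d k'. blockok d f w}"
  have cO: "real (card ?O) > 0" using LL_ne[of d k' m] by (simp add: card_gt_0_iff)
  have sub: "{ws\<in>?O. decide ws (run_oracle adv f [] (qsq d ws))} \<subseteq> {ws\<in>?O. bad adv f f [] (qsq d ws)} \<union> LL ?G m"
  proof safe
    fix ws assume ws: "ws \<in> ?O" "decide ws (run_oracle adv f [] (qsq d ws))" "ws \<notin> LL ?G m"
    have sw: "set ws \<subseteq> Blk d k'" using ws by (simp add: LL_def)
    show "bad adv f f [] (qsq d ws)"
    proof (rule ccontr)
      assume "\<not> bad adv f f [] (qsq d ws)"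
      then have "run_oracle adv f [] (qsq d ws) = map f (qsq d ws)" by (rule run_good)
      then have "\<forall>w\<in>set ws. blockok d f w" using ws(2) decide_map[OF sw] by simp
      then show False using ws sw by (auto simp: LL_def)
    qed
  qed
  have "real (card {ws\<in>?O. decide ws (run_oracle adv f [] (qsq d ws))})
      \<le> real (card ({ws\<in>?O. bad adv f f [] (qsq d ws)} \<union> LL ?G m))"
    by (rule of_nat_mono, rule card_mono) (use sub in auto)
  also have "\<dots> \<le> real (card {ws\<in>?O. bad adv f f [] (qsq d ws)}) + real (card (LL ?G m))"
  proof -
    have "card ({ws\<in>?O. bad adv f f [] (qsq d ws)} \<union> LL ?G m) \<le> card {ws\<in>?O. bad adv f f [] (qsq d ws)} + card (LL ?G m)"
      by (rule card_Un_le)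
    then have "real (card ({ws\<in>?O. bad adv f f [] (qsq d ws)} \<union> LL ?G m)) \<le> real (card {ws\<in>?O. bad adv f f [] (qsq d ws)} + card (LL ?G m))"
      by (rule of_nat_mono)
    then show ?thesis by simp
  qed
  also have "\<dots> \<le> ?b * real (card ?O) + ((1 - e/4) * real (card (Blk d k'))) ^ m"
  proof (rule add_mono)
    show "real (card {ws\<in>?O. bad adv f f [] (qsq d ws)}) \<le> ?b * real (card ?O)"
      using bad_total[OF adv, of f k' m] by (simp add: ind_card card_LL)
    have "real (card (LL ?G m)) = real (card ?G) ^ m" by (simp add: card_LL)
    also have "\<dots> \<le> ((1 - e/4) * real (card (Blk d k'))) ^ m"
      by (rule power_mono[OF sound_block[OF far e k]]) simp
    finally show "real (card (LL ?G m)) \<le> ((1 - e/4) * real (card (Blk d k'))) ^ m" .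
  qed
  also have "\<dots> = (?b + (1 - e/4) ^ m) * real (card ?O)"
    by (simp only: power_mult_distrib card_LL[OF finite_Blk] of_nat_power distrib_right)
  finally show ?thesis unfolding accept_Tst using cO by (simp add: field_simps)
qed



definition mm :: "real \<Rightarrow> nat" where "mm e = nat \<lceil>12 / e\<rceil>"
definition XX :: "real \<Rightarrow> nat \<Rightarrow> real" where "XX e t = 4056 * (real t + 1) / e ^ 2"
definition nn :: "real \<Rightarrow> nat \<Rightarrow> nat" where "nn e t = nat \<lceil>log 2 (XX e t)\<rceil>"
definition kk :: "real \<Rightarrow> nat \<Rightarrow> nat" where "kk e t = 2 * nn e t + 5"

lemma ln2_ge: "ln 2 \<ge> (1/2::real)"
proof -
  have "ln (1/2::real) \<le> 1/2 - 1" by (rule ln_le_minus_one) simp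
  moreover have "ln (1/2::real) = - ln 2" by (simp add: ln_div)
  ultimately show ?thesis by simp
qed

lemma m_bounds: assumes "0 < e" "e < 1"
  shows "12 / e \<le> real (mm e)" "real (mm e) \<le> 13 / e"
proof -
  show "12 / e \<le> real (mm e)" unfolding mm_def by (rule of_nat_ceiling)
  have p: "12 / e > 0" using assms by simp
  have "\<lceil>12 / e\<rceil> \<ge> 0" using p by (simp, linarith)
  then have "real (mm e) = of_int \<lceil>12 / e\<rceil>" unfolding mm_def by simp
  also have "\<dots> \<le> 12 / e + 1" by (rule of_int_ceiling_le_add_one)
  also have "\<dots> \<le> 13 / e" using assms by (simp add: field_simps)
  finally show "real (mm e) \<le> 13 / e" .
qed

lemma X_ge1: assumes "0 < e" "e < 1" shows "XX e t \<ge> 1"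
proof -
  have "e ^ 2 \<le> 1" using assms by (simp add: power_le_one)
  moreover have "e ^ 2 > 0" using assms by simp
  ultimately have "1 \<le> 4056 * (real t + 1) / e ^ 2" by (simp add: field_simps)
  then show ?thesis by (simp add: XX_def)
qed

lemma n_bounds: assumes "0 < e" "e < 1"
  shows "2 ^ nn e t \<ge> XX e t" "real (nn e t) \<le> log 2 (XX e t) + 1"
proof -
  have X: "XX e t \<ge> 1" by (rule X_ge1[OF assms])
  have lg: "log 2 (XX e t) \<ge> 0" using X by simp
  have "real (nn e t) \<ge> log 2 (XX e t)" unfolding nn_def by (rule of_nat_ceiling)
  then have "2 powr real (nn e t) \<ge> 2 powr log 2 (XX e t)" by simp
  then show "2 ^ nn e t \<ge> XX e t" using X by (simp add: powr_realpow)
  have "\<lceil>log 2 (XX e t)\<rceil> \<ge> 0" using lg by simp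
  then have "real (nn e t) = of_int \<lceil>log 2 (XX e t)\<rceil>" unfolding nn_def by simp
  also have "\<dots> \<le> log 2 (XX e t) + 1" by (rule of_int_ceiling_le_add_one)
  finally show "real (nn e t) \<le> log 2 (XX e t) + 1" .
qed

lemma lin_exp: "real (2 * n + 7) \<le> 64 * (2::real) ^ n"
proof -
  have "n < 2 ^ n" by (rule less_exp)
  moreover have "1 \<le> (2::nat) ^ n" by simp
  ultimately have "2 * n + 7 \<le> 64 * (2::nat) ^ n" by linarith
  then have "real (2 * n + 7) \<le> real (64 * (2::nat) ^ n)" by (rule of_nat_mono)
  then show ?thesis by simp
qed

lemma pow_bound: assumes "0 < e" "e < 1" shows "(1 - e/4) ^ mm e \<le> 1/8"
proof -
  have "1 - e/4 \<le> exp (- (e/4))" using exp_ge_add_one_self[of "- (e/4)"] by simp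
  then have "(1 - e/4) ^ mm e \<le> exp (- (e/4)) ^ mm e" by (rule power_mono) (use assms in simp)
  also have "\<dots> = exp (real (mm e) * (- (e/4)))" by (rule exp_of_nat_mult[symmetric])
  also have "\<dots> \<le> exp (-3)"
  proof -
    have "real (mm e) * e \<ge> 12" using m_bounds(1)[OF assms] assms by (simp add: field_simps)
    then show ?thesis by simp
  qed
  also have "\<dots> \<le> 1/8"
  proof -
    have "exp (1::real) \<ge> 2" using exp_ge_add_one_self[of 1] by simp
    then have "exp (1::real) ^ 3 \<ge> 2 ^ 3" by (rule power_mono) simp
    moreover have "exp (3::real) = exp 1 ^ 3" using exp_of_nat_mult[of 3 "1::real"] by simp
    ultimately have "exp (3::real) \<ge> 8" by simp
    then show ?thesis by (simp add: exp_minus' field_simps)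
  qed
  finally show ?thesis .
qed

lemma Q_bound: assumes "0 < e" "e < 1"
  shows "real (mm e * (Suc (kk e t) + 1)) \<le> 211029 * (1 / e) * (1 + ln ((real t + 1) / e))"
proof -
  define L where "L = ln ((real t + 1) / e)"
  have pos: "(real t + 1) / e > 0" "1 / e > 0" using assms by auto
  have Le: "ln (1 / e) \<le> L" unfolding L_def using assms by (intro ln_mono) (auto simp: field_simps)
  have L0: "0 \<le> ln (1/e)" using assms by simp
  have "ln (XX e t) = ln 4056 + L + ln (1/e)"
  proof -
    have "XX e t = 4056 * ((real t + 1) / e) * (1 / e)" by (simp add: XX_def power2_eq_square)
    moreover have "ln (4056 * ((real t + 1) / e) * (1 / e)) = ln (4056 * ((real t + 1) / e)) + ln (1 / e)"
      by (rule ln_mult_pos) (use pos in auto)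
    moreover have "ln (4056 * ((real t + 1) / e)) = ln 4056 + ln ((real t + 1) / e)"
      by (rule ln_mult_pos) (use pos in auto)
    ultimately show ?thesis by (simp only: L_def)
  qed
  moreover have "ln (4056::real) \<le> 4055" using ln_le_minus_one[of "4056::real"] by simp
  ultimately have lnX: "ln (XX e t) \<le> 4055 + 2 * L" using Le by linarith
  have "log 2 (XX e t) = ln (XX e t) / ln 2" by (simp add: log_def)
  also have "\<dots> \<le> 2 * ln (XX e t)"
  proof -
    have "ln (XX e t) \<ge> 0" using X_ge1[OF assms] by simp
    then have "ln (XX e t) / ln 2 \<le> ln (XX e t) / (1/2)"
      using ln2_ge by (intro divide_left_mono) auto
    then show ?thesis by simp
  qed
  finally have h1: "log 2 (XX e t) \<le> 2 * ln (XX e t)" .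
  have h2: "2 * ln (XX e t) \<le> 2 * (4055 + 2 * L)" using lnX by simp
  have h3: "real (nn e t) \<le> log 2 (XX e t) + 1" by (rule n_bounds(2)[OF assms])
  have "real (nn e t) \<le> 2 * (4055 + 2 * L) + 1" using h1 h2 h3 by linarith
  then have k1: "real (Suc (kk e t) + 1) \<le> 16229 * (1 + L)" using Le L0 by (simp add: kk_def)
  have "real (mm e * (Suc (kk e t) + 1)) = real (mm e) * real (Suc (kk e t) + 1)" by (simp only: of_nat_mult)
  also have "\<dots> \<le> (13 / e) * (16229 * (1 + L))"
    by (rule mult_mono[OF m_bounds(2)[OF assms] k1]) (use assms in auto)
  also have "\<dots> \<le> 211029 * (1 / e) * (1 + L)"
  proof -
    have "1 + L \<ge> 0" using Le L0 by linarith
    then have nn: "(1 / e) * (1 + L) \<ge> 0" using assms by simp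
    have "(13 / e) * (16229 * (1 + L)) = 210977 * ((1 / e) * (1 + L))" by simp
    also have "\<dots> \<le> 211029 * ((1 / e) * (1 + L))" using nn by (intro mult_right_mono) auto
    finally show ?thesis by (simp add: mult.assoc)
  qed
  finally show ?thesis by (simp add: L_def)
qed



lemma partA_real:
  fixes C c0 e t u Q L :: real
  assumes C: "C > 0" and c0: "c0 = 1 / (7 * C)" and e: "0 < e" "e < 1" and t: "1 \<le> t"
    and u: "u \<ge> 1" and tu: "t \<le> c0 * e * u" and Q: "0 \<le> Q" "Q \<le> C * (1 / e) * (1 + L)" and L: "L \<le> u"
  shows "Q * t * Q \<le> u ^ 4 / 12"
proof -
  have c0p: "c0 > 0" using C c0 by simp
  have i1: "1 / e \<le> c0 * u"
  proof -
    have "1 \<le> c0 * e * u" using t tu by linarith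
    then have "1 / e \<le> c0 * e * u / e" using e by (intro divide_right_mono) auto
    then show ?thesis using e by simp
  qed
  have Q2: "Q \<le> 2 * C * u * (1 / e)"
  proof -
    have "1 + L \<le> 2 * u" using L u by linarith
    then have "C * (1 / e) * (1 + L) \<le> C * (1 / e) * (2 * u)" using C e by (intro mult_left_mono) auto
    then show ?thesis using Q(2) by (simp add: algebra_simps)
  qed
  have "Q * t * Q = Q * Q * t" by simp
  also have "\<dots> \<le> (2 * C * u * (1 / e)) * (2 * C * u * (1 / e)) * t"
    using Q Q2 t by (intro mult_right_mono mult_mono) auto
  also have "\<dots> \<le> (2 * C * u * (1 / e)) * (2 * C * u * (1 / e)) * (c0 * e * u)"
    by (rule mult_left_mono[OF tu zero_le_square])
  also have "\<dots> = 4 * C * C * c0 * u * u * u * (1 / e)" using e by (simp add: field_simps)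
  also have "\<dots> \<le> 4 * C * C * c0 * u * u * u * (c0 * u)"
    using i1 C c0p u by (intro mult_left_mono) auto
  also have "\<dots> = (4 / 49) * u ^ 4" unfolding c0 using C by (simp add: field_simps power4_eq_xxxx)
  also have "\<dots> \<le> u ^ 4 / 12" using u by simp
  finally show ?thesis .
qed

lemma ln_u: assumes "u \<ge> (1::real)" shows "ln (2 * u) \<le> u"
proof -
  have "ln (2 * u) = ln 2 + ln u" using assms by (intro ln_mult_pos) auto
  moreover have "ln u \<le> u - 1" using assms by (intro ln_le_minus_one) auto
  ultimately show ?thesis using ln_2_less_1 by linarith
qed

lemma delta_bound:
  assumes e: "0 < e" "e < 1" and tb: "real t \<le> 1 / 1477203 * e powr (5/4) * 2 powr (real d / 4)"
  shows "real (mm e) * ((real (Suc (kk e t) + 1)) * (real t * real (mm e * (Suc (kk e t) + 1))) / 2 ^ d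
     + 2 * (real t * real (mm e * (Suc (kk e t) + 1))) / 2 ^ Suc (kk e t)) \<le> 1/6"
proof -
  define m where "m = real (mm e)"
  define K1 where "K1 = real (Suc (kk e t) + 1)"
  define Q where "Q = real (mm e * (Suc (kk e t) + 1))"
  define n where "n = nn e t"
  have QmK: "Q = m * K1" by (simp only: Q_def m_def K1_def of_nat_mult)
  have K1n: "K1 = real (2 * n + 7)" by (simp add: K1_def kk_def n_def)
  have Sk: "Suc (kk e t) = n + (n + 6)" by (simp add: kk_def n_def)
  have m0: "m \<ge> 0" by (simp add: m_def)
  have mb: "m \<le> 13 / e" using m_bounds(2)[OF e] by (simp add: m_def)
  have t0: "real t \<ge> 0" by simp
  have B: "24 * m * real t * Q \<le> 2 ^ Suc (kk e t)"
  proof -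
    have "24 * m * real t * Q = 24 * (m * m) * K1 * real t" by (simp add: QmK)
    also have "\<dots> \<le> 24 * ((13 / e) * (13 / e)) * K1 * (real t + 1)"
      using mb m0 e by (intro mult_mono mult_left_mono) (auto simp: K1_def)
    also have "\<dots> = XX e t * K1" using e by (simp add: XX_def field_simps power2_eq_square)
    also have "\<dots> \<le> 2 ^ n * (64 * 2 ^ n)"
      using n_bounds(1)[OF e, of t] lin_exp[of n] X_ge1[OF e, of t]
      by (intro mult_mono) (auto simp: n_def K1n)
    also have "\<dots> = 2 ^ Suc (kk e t)" unfolding Sk power_add by simp
    finally show ?thesis .
  qed
  have Bt: "2 * (real t * Q) / 2 ^ Suc (kk e t) * m \<le> 1 / 12"
  proof -
    have "2 * (real t * Q) / 2 ^ Suc (kk e t) * m = (24 * m * real t * Q) / 2 ^ Suc (kk e t) / 12"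
      by (simp add: field_simps)
    also have "\<dots> \<le> 2 ^ Suc (kk e t) / 2 ^ Suc (kk e t) / 12"
      using B by (intro divide_right_mono) auto
    finally show ?thesis by simp
  qed
  have At: "Q * (real t * Q) / 2 ^ d \<le> 1 / 12"
  proof (cases "t = 0")
    case True then show ?thesis by simp
  next
    case False
    then have t1: "real t \<ge> 1" by simp
    define u where "u = 2 powr (real d / 4)"
    have u1: "u \<ge> 1" unfolding u_def by (rule ge_one_powr_ge_zero) auto
    have u4: "u ^ 4 = 2 ^ d"
    proof -
      have "u ^ 4 = 2 powr (real 4 * (real d / 4))" unfolding u_def by (rule powr_power) simp
      also have "\<dots> = 2 powr (real d)" by simp
      also have "\<dots> = 2 ^ d" by (simp add: powr_realpow)
      finally show ?thesis .
    qed
    have ep: "e powr (5/4) \<le> e" using e by (intro powr_le_one_le) auto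
    have tu: "real t \<le> 1 / 1477203 * e * u"
    proof -
      have a: "1 / 1477203 * e powr (5/4) * u \<le> 1 / 1477203 * e * u"
        using ep u1 by (intro mult_right_mono mult_left_mono) auto
      show ?thesis using tb a unfolding u_def by linarith
    qed
    have Lu: "ln ((real t + 1) / e) \<le> u"
    proof -
      have "(real t + 1) / e \<le> 2 * u"
      proof -
        have "real t + 1 \<le> 2 * real t" using t1 by simp
        also have "\<dots> \<le> 2 * (1 / 1477203 * e * u)" using tu by simp
        also have "\<dots> \<le> 2 * u * e" using e u1 by (simp add: field_simps)
        finally show ?thesis using e by (simp add: field_simps)
      qed
      then have "ln ((real t + 1) / e) \<le> ln (2 * u)" using e by (intro ln_mono) auto
      also have "\<dots> \<le> u" by (rule ln_u[OF u1])
      finally show ?thesis .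
    qed
    have "Q * real t * Q \<le> u ^ 4 / 12"
      by (rule partA_real[of 211029 "1/1477203" e "real t" u Q "ln ((real t + 1) / e)"])
         (use e t1 u1 tu Lu Q_bound[OF e, of t] in \<open>auto simp: Q_def\<close>)
    then show ?thesis using u4 by (simp add: field_simps)
  qed
  have "real (mm e) * ((real (Suc (kk e t) + 1)) * (real t * real (mm e * (Suc (kk e t) + 1))) / 2 ^ d
     + 2 * (real t * real (mm e * (Suc (kk e t) + 1))) / 2 ^ Suc (kk e t))
     = Q * (real t * Q) / 2 ^ d + 2 * (real t * Q) / 2 ^ Suc (kk e t) * m"
    by (simp add: Q_def m_def K1_def QmK[unfolded Q_def m_def K1_def] field_simps)
  also have "\<dots> \<le> 1/12 + 1/12" using At Bt by linarith
  finally show ?thesis by simp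
qed



lemma main_fact:
  assumes h: "0 < e \<and> e < 1 \<and> real t \<le> 1 / 1477203 * e powr (5 / 4) * 2 powr (real d / 4)"
  shows "(\<forall>(qs, dec) \<in> set_pmf (Tst d (mm e) (kk e t)).
            set qs \<subseteq> cube d \<and> real (length qs) \<le> 211029 * (1 / e) * (1 + ln ((real t + 1) / e))) \<and>
        (\<forall>adv f. valid_adversary d t adv \<longrightarrow>
            (linear_fn d f \<longrightarrow> accept_prob (Tst d (mm e) (kk e t)) adv f \<ge> 2/3) \<and>
            (eps_far_linear d e f \<longrightarrow> 1 - accept_prob (Tst d (mm e) (kk e t)) adv f \<ge> 2/3))"
proof -
  from h have e: "0 < e" "e < 1" and tb: "real t \<le> 1 / 1477203 * e powr (5 / 4) * 2 powr (real d / 4)" by auto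
  have D: "real (mm e) * ((real (Suc (kk e t) + 1)) * (real t * real (mm e * (Suc (kk e t) + 1))) / 2 ^ d
     + 2 * (real t * real (mm e * (Suc (kk e t) + 1))) / 2 ^ Suc (kk e t)) \<le> 1/6"
    by (rule delta_bound[OF e tb])
  have P1: "\<forall>(qs, dec) \<in> set_pmf (Tst d (mm e) (kk e t)).
            set qs \<subseteq> cube d \<and> real (length qs) \<le> 211029 * (1 / e) * (1 + ln ((real t + 1) / e))"
  proof (intro ballI, clarify)
    fix qs dec assume "(qs, dec) \<in> set_pmf (Tst d (mm e) (kk e t))"
    from set_Tst[OF this] Q_bound[OF e, of t]
    show "set qs \<subseteq> cube d \<and> real (length qs) \<le> 211029 * (1 / e) * (1 + ln ((real t + 1) / e))" by simp
  qed
  have P2: "accept_prob (Tst d (mm e) (kk e t)) adv f \<ge> 2/3"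
    if adv: "valid_adversary d t adv" and lin: "linear_fn d f" for adv f
  proof -
    have "accept_prob (Tst d (mm e) (kk e t)) adv f \<ge> 1 - real (mm e) * ((real (Suc (kk e t) + 1)) * (real t * real (mm e * (Suc (kk e t) + 1))) / 2 ^ d
     + 2 * (real t * real (mm e * (Suc (kk e t) + 1))) / 2 ^ Suc (kk e t))"
      by (rule complete_prob[OF lin adv])
    then show ?thesis using D by linarith
  qed
  have P3: "1 - accept_prob (Tst d (mm e) (kk e t)) adv f \<ge> 2/3"
    if adv: "valid_adversary d t adv" and far: "eps_far_linear d e f" for adv f
  proof -
    have k1: "kk e t \<ge> 1" by (simp add: kk_def)
    have "accept_prob (Tst d (mm e) (kk e t)) adv f \<le> real (mm e) * ((real (Suc (kk e t) + 1)) * (real t * real (mm e * (Suc (kk e t) + 1))) / 2 ^ d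
     + 2 * (real t * real (mm e * (Suc (kk e t) + 1))) / 2 ^ Suc (kk e t)) + (1 - e/4) ^ mm e"
      by (rule sound_prob[OF far e k1 adv])
    then show ?thesis using D pow_bound[OF e] by linarith
  qed
  show ?thesis using P1 P2 P3 by blast
qed

theorem corollary5p1:
  shows "\<exists>c0::real. 0 < c0 \<and> c0 < 1 \<and> (\<exists>C::real. 0 < C \<and>
    (\<exists>T :: nat \<Rightarrow> real \<Rightarrow> nat \<Rightarrow> (bool list list \<times> (bool list \<Rightarrow> bool)) pmf.
      \<forall>d \<epsilon> t. 0 < \<epsilon> \<and> \<epsilon> < 1 \<and> real t \<le> c0 * \<epsilon> powr (5/4) * 2 powr (real d / 4) \<longrightarrow>
        (\<forall>(qs, dec) \<in> set_pmf (T d \<epsilon> t).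
            set qs \<subseteq> cube d \<and>
            real (length qs) \<le> C * (1 / \<epsilon>) * (1 + ln ((real t + 1) / \<epsilon>))) \<and>
        (\<forall>adv f. valid_adversary d t adv \<longrightarrow>
            (linear_fn d f \<longrightarrow> accept_prob (T d \<epsilon> t) adv f \<ge> 2/3) \<and>
            (eps_far_linear d \<epsilon> f \<longrightarrow> 1 - accept_prob (T d \<epsilon> t) adv f \<ge> 2/3))))"
  apply (rule exI[of _ "1/1477203"])
  apply (intro conjI)
    apply simp
   apply simp
  apply (rule exI[of _ "211029"])
  apply (intro conjI)
   apply simp
  apply (rule exI[of _ "\<lambda>d e t. Tst d (mm e) (kk e t)"])
  apply (intro allI impI)
  apply (rule main_fact)
  apply assumption
  done


end
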